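(* Let $P$ be a tree poset of height $h$ and $x\in P$, let $\varepsilon>0$, and suppose $\delta>0$ is such that for every sufficiently large $n$, every family $\mathcal F\subseteq 2^{[n]}$ with $|\mathcal F|\ge(h-1+\varepsilon)\binom{n}{\lfloor n/2\rfloor}$ contains a copy of $P(x,\delta n)$. Then for every sufficiently large $n$ there exists a function $$f:\binom{2^{[n]}}{\le |P|2^n/\delta n}\to\binom{2^{[n]}}{\le (h-1+\varepsilon)\binom{n}{\lfloor n/2\rfloor}}$$ such that for every $P$-free family $\mathcal F\subseteq 2^{[n]}$ there is a subfamily $\mathcal H\subseteq\mathcal F$ with $\mathcal H\in\binom{2^{[n]}}{\le|P|2^n/\delta n}$ and $\mathcal F\subseteq\mathcal H\cup f(\mathcal H)$.
   Context: For a set $S$ and $t\ge0$, $\binom{S}{\le t}$ denotes the set of all subsets of $S$ of size at most $t$; thus $\binom{2^{[n]}}{\le t}$ is the set of all families of subsets of $[n]$ with at most $t$ members. Posets are finite collections of finite sets ordered by inclusion. A poset homomorphism $\phi:P\to Q$ is a map with $A\subseteq B\Rightarrow \phi(A)\subseteq\phi(B)$; $Q$ contains a copy of $P$ if there is an injective poset homomorphism $P\to Q$, and is $P$-free otherwise. The Hasse diagram of $P$ is the directed graph on $P$ with an edge $A\to B$ when $A\subsetneq B$ and no $C\in P$ has $A\subsetneq C\subsetneq B$; the undirected Hasse diagram forgets orientations. A tree poset is a poset whose undirected Hasse diagram is a tree. The height is the number of elements of a longest chain. For a tree poset $P$, $x\in P$ and an integer $d\ge2$, the $d$-blow-up $P(x,d)$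 rooted at $x$ is the tree poset whose Hasse diagram is obtained as follows: each $u\in P$ at distance $\rho$ from $x$ is replaced by $d^{\rho}$ elements $u^1,\dots,u^{d^\rho}$; for each edge $uv$ of the Hasse diagram with $v$ at distance $\rho-1$ from $x$ (and $u$ at distance $\rho$), the $u^i$ are partitioned into $d^{\rho-1}$ disjoint sets $U^1,\dots,U^{d^{\rho-1}}$ of size $d$ and $v^j$ is joined to every element of $U^j$, with the same orientation as $uv$. Non-integer quantities such as $\delta n$ are rounded down. *)

theory Defs
  imports Complex_Main
begin

text \<open>Abstract finite posets are given by a carrier V and an order relation le.
  A family of sets P is the poset (P, (\<subseteq>)).\<close>

definition strict_between :: "'a set \<Rightarrow> ('a \<Rightarrow> 'a \<Rightarrow> bool) \<Rightarrow> 'a \<Rightarrow> 'a \<Rightarrow> 'a \<Rightarrow> bool" where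
  "strict_between V le a c b \<longleftrightarrow> c \<in> V \<and> le a c \<and> le c b \<and> c \<noteq> a \<and> c \<noteq> b"

definition hasse_edge :: "'a set \<Rightarrow> ('a \<Rightarrow> 'a \<Rightarrow> bool) \<Rightarrow> 'a \<Rightarrow> 'a \<Rightarrow> bool" where
  "hasse_edge V le a b \<longleftrightarrow> a \<in> V \<and> b \<in> V \<and> le a b \<and> a \<noteq> b \<and>
     \<not> (\<exists>c. strict_between V le a c b)"

definition hasse_adj :: "'a set \<Rightarrow> ('a \<Rightarrow> 'a \<Rightarrow> bool) \<Rightarrow> 'a \<Rightarrow> 'a \<Rightarrow> bool" where
  "hasse_adj V le a b \<longleftrightarrow> hasse_edge V le a b \<or> hasse_edge V le b a"

definition is_walk :: "('a \<Rightarrow> 'a \<Rightarrow> bool) \<Rightarrow> 'a list \<Rightarrow> bool" where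
  "is_walk adj vs \<longleftrightarrow> vs \<noteq> [] \<and> (\<forall>i. Suc i < length vs \<longrightarrow> adj (vs ! i) (vs ! Suc i))"

definition graph_connected :: "'a set \<Rightarrow> ('a \<Rightarrow> 'a \<Rightarrow> bool) \<Rightarrow> bool" where
  "graph_connected V adj \<longleftrightarrow>
     (\<forall>a\<in>V. \<forall>b\<in>V. \<exists>vs. is_walk adj vs \<and> hd vs = a \<and> last vs = b \<and> set vs \<subseteq> V)"

definition graph_acyclic :: "('a \<Rightarrow> 'a \<Rightarrow> bool) \<Rightarrow> bool" where
  "graph_acyclic adj \<longleftrightarrow>
     \<not> (\<exists>vs. length vs \<ge> 3 \<and> distinct vs \<and> is_walk adj vs \<and> adj (last vs) (hd vs))"

definition is_poset :: "'a set \<Rightarrow> ('a \<Rightarrow> 'a \<Rightarrow> bool) \<Rightarrow> bool" where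
  "is_poset V le \<longleftrightarrow> finite V \<and> (\<forall>a\<in>V. le a a) \<and>
     (\<forall>a\<in>V. \<forall>b\<in>V. le a b \<and> le b a \<longrightarrow> a = b) \<and>
     (\<forall>a\<in>V. \<forall>b\<in>V. \<forall>c\<in>V. le a b \<and> le b c \<longrightarrow> le a c)"

definition tree_poset :: "'a set \<Rightarrow> ('a \<Rightarrow> 'a \<Rightarrow> bool) \<Rightarrow> bool" where
  "tree_poset V le \<longleftrightarrow> is_poset V le \<and> V \<noteq> {} \<and>
     graph_connected V (hasse_adj V le) \<and> graph_acyclic (hasse_adj V le)"

definition poset_height :: "'a set \<Rightarrow> ('a \<Rightarrow> 'a \<Rightarrow> bool) \<Rightarrow> nat" where
  "poset_height V le = Max {card C | C. C \<subseteq> V \<and> (\<forall>a\<in>C. \<forall>b\<in>C. le a b \<or> le b a)}"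

definition hasse_dist :: "'a set \<Rightarrow> ('a \<Rightarrow> 'a \<Rightarrow> bool) \<Rightarrow> 'a \<Rightarrow> 'a \<Rightarrow> nat" where
  "hasse_dist V le a b = (LEAST k. \<exists>vs. is_walk (hasse_adj V le) vs \<and> hd vs = a \<and>
      last vs = b \<and> length vs = Suc k)"

text \<open>The d-blow-up P(x,d): element u at distance \<rho> from x is replaced by
  the d^\<rho> elements (u,i), i < d^\<rho>; for a Hasse edge between u (distance \<rho>)
  and v (distance \<rho>-1), (v,j) is joined to the block U^j = {(u,i). i div d = j},
  with the same orientation as the edge between u and v.\<close>
definition blowup_carrier :: "'a set \<Rightarrow> ('a \<Rightarrow> 'a \<Rightarrow> bool) \<Rightarrow> 'a \<Rightarrow> nat \<Rightarrow> ('a \<times> nat) set" where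
  "blowup_carrier V le x d = {(u, i). u \<in> V \<and> i < d ^ hasse_dist V le x u}"

definition blowup_edge :: "'a set \<Rightarrow> ('a \<Rightarrow> 'a \<Rightarrow> bool) \<Rightarrow> 'a \<Rightarrow> nat \<Rightarrow> ('a \<times> nat) \<Rightarrow> ('a \<times> nat) \<Rightarrow> bool" where
  "blowup_edge V le x d p q \<longleftrightarrow>
     p \<in> blowup_carrier V le x d \<and> q \<in> blowup_carrier V le x d \<and>
     hasse_edge V le (fst p) (fst q) \<and>
     ((hasse_dist V le x (fst p) = Suc (hasse_dist V le x (fst q)) \<and> snd p div d = snd q) \<or>
      (hasse_dist V le x (fst q) = Suc (hasse_dist V le x (fst p)) \<and> snd q div d = snd p))"

definition blowup_le :: "'a set \<Rightarrow> ('a \<Rightarrow> 'a \<Rightarrow> bool) \<Rightarrow> 'a \<Rightarrow> nat \<Rightarrow> ('a \<times> nat) \<Rightarrow> ('a \<times> nat) \<Rightarrow> bool" where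
  "blowup_le V le x d = (blowup_edge V le x d)\<^sup>*\<^sup>*"

definition contains_copy :: "'b set \<Rightarrow> ('b \<Rightarrow> 'b \<Rightarrow> bool) \<Rightarrow> 'c set set \<Rightarrow> bool" where
  "contains_copy V le F \<longleftrightarrow> (\<exists>\<phi>. inj_on \<phi> V \<and> \<phi> ` V \<subseteq> F \<and>
     (\<forall>a\<in>V. \<forall>b\<in>V. le a b \<longrightarrow> \<phi> a \<subseteq> \<phi> b))"

end

theory Submission
  imports Defs
begin

lemma is_walk_Nil[simp]: "\<not> is_walk adj []" by (simp add: is_walk_def)
lemma is_walk_single[simp]: "is_walk adj [a]" by (simp add: is_walk_def)
lemma is_walk_Cons2[simp]: "is_walk adj (a#b#xs) \<longleftrightarrow> adj a b \<and> is_walk adj (b#xs)"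
  unfolding is_walk_def
proof safe
  fix i assume "\<forall>i. Suc i < length (a # b # xs) \<longrightarrow> adj ((a # b # xs) ! i) ((a # b # xs) ! Suc i)"
    and "Suc i < length (b # xs)"
  then show "adj ((b # xs) ! i) ((b # xs) ! Suc i)"
    by (metis Suc_less_eq length_Cons nth_Cons_Suc)
next
  fix i assume "adj a b" "\<forall>i. Suc i < length (b # xs) \<longrightarrow> adj ((b # xs) ! i) ((b # xs) ! Suc i)"
    "Suc i < length (a # b # xs)"
  then show "adj ((a # b # xs) ! i) ((a # b # xs) ! Suc i)"
    by (cases i) auto
qed auto

lemma is_walk_append:
  assumes "xs \<noteq> []" "ys \<noteq> []"
  shows "is_walk adj (xs @ ys) \<longleftrightarrow> is_walk adj xs \<and> is_walk adj ys \<and> adj (last xs) (hd ys)"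
  using assms
proof (induction xs rule: induct_list012)
  case (2 x)
  then show ?case by (cases ys) auto
next
  case (3 x y zs)
  then show ?case by auto
qed auto

lemma is_walk_rev:
  assumes "\<And>a b. adj a b \<Longrightarrow> adj b a"
  shows "is_walk adj (rev xs) \<longleftrightarrow> is_walk adj xs"
proof (induction xs rule: induct_list012)
  case (3 x y zs)
  have "is_walk adj (rev (x#y#zs)) \<longleftrightarrow> is_walk adj (rev (y#zs) @ [x])" by simp
  also have "\<dots> \<longleftrightarrow> is_walk adj (rev (y#zs)) \<and> adj y x"
    by (subst is_walk_append) auto
  also have "\<dots> \<longleftrightarrow> is_walk adj (x#y#zs)" using 3 assms by auto
  finally show ?case .
qed auto

lemma is_walk_take: "is_walk adj xs \<Longrightarrow> 0 < i \<Longrightarrow> is_walk adj (take i xs)"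
  unfolding is_walk_def by auto

lemma is_walk_drop: "is_walk adj xs \<Longrightarrow> i < length xs \<Longrightarrow> is_walk adj (drop i xs)"
  unfolding is_walk_def by auto

lemma in_set_dropE: "z \<in> set (drop i xs) \<Longrightarrow> \<exists>j. i \<le> j \<and> j < length xs \<and> xs ! j = z"
proof -
  assume "z \<in> set (drop i xs)"
  then obtain k where k: "k < length (drop i xs)" "drop i xs ! k = z" by (auto simp: in_set_conv_nth)
  then show ?thesis by (intro exI[of _ "i + k"]) auto
qed

locale tp =
  fixes P :: "'a set set" and x :: "'a set"
  assumes tree: "tree_poset P (\<subseteq>)" and xP: "x \<in> P"
begin

abbreviation adj where "adj \<equiv> hasse_adj P (\<subseteq>)"
abbreviation D where "D \<equiv> hasse_dist P (\<subseteq>) x"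

lemma finP: "finite P" using tree unfolding tree_poset_def is_poset_def by auto

lemma adj_sym: "adj a b \<Longrightarrow> adj b a" unfolding hasse_adj_def by auto
lemma adj_P: "adj a b \<Longrightarrow> a \<in> P \<and> b \<in> P" unfolding hasse_adj_def hasse_edge_def by auto
lemma adj_neq: "adj a b \<Longrightarrow> a \<noteq> b" unfolding hasse_adj_def hasse_edge_def by auto

lemma D_walk: assumes "v \<in> P"
  shows "\<exists>vs. is_walk adj vs \<and> hd vs = x \<and> last vs = v \<and> length vs = Suc (D v)"
proof -
  from tree xP assms obtain vs where vs: "is_walk adj vs" "hd vs = x" "last vs = v"
    unfolding tree_poset_def graph_connected_def by blast
  then have "length vs = Suc (length vs - 1)" by (cases vs) auto
  with vs have "\<exists>k vs. is_walk adj vs \<and> hd vs = x \<and> last vs = v \<and> length vs = Suc k" by blast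
  then show ?thesis unfolding hasse_dist_def by (rule LeastI_ex)
qed

lemma D_le: "is_walk adj vs \<Longrightarrow> hd vs = x \<Longrightarrow> last vs = v \<Longrightarrow> length vs = Suc k \<Longrightarrow> D v \<le> k"
  unfolding hasse_dist_def by (rule Least_le) blast

lemma D_x: "D x = 0"
  using D_le[of "[x]" x 0] by simp

lemma D_0: assumes "v \<in> P" "D v = 0" shows "v = x"
proof -
  obtain vs where vs: "is_walk adj vs" "hd vs = x" "last vs = v" "length vs = Suc (D v)"
    using D_walk assms by blast
  then obtain a where "vs = [a]" using assms by (cases vs) auto
  then show ?thesis using vs by simp
qed

lemma D_adj: assumes "adj u w" shows "D w \<le> Suc (D u)"
proof -
  obtain vs where vs: "is_walk adj vs" "hd vs = x" "last vs = u" "length vs = Suc (D u)"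
    using D_walk adj_P assms by blast
  have "vs \<noteq> []" using vs by auto
  have "is_walk adj (vs @ [w])" using vs assms \<open>vs \<noteq> []\<close> by (subst is_walk_append) auto
  moreover have "hd (vs @ [w]) = x" using vs \<open>vs \<noteq> []\<close> by simp
  ultimately show ?thesis using D_le[of "vs @ [w]" w "Suc (D u)"] vs by simp
qed

lemma D_path:
  assumes vs: "is_walk adj vs" "hd vs = x" "last vs = v" "length vs = Suc (D v)"
    and i: "i < length vs"
  shows "D (vs ! i) = i"
proof -
  have ne: "vs \<noteq> []" using vs by auto
  have "is_walk adj (take (Suc i) vs)" using is_walk_take vs by auto
  moreover have "hd (take (Suc i) vs) = x" using vs ne by (simp add: hd_conv_nth)
  moreover have "last (take (Suc i) vs) = vs ! i" using i by (simp add: take_Suc_conv_app_nth)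
  ultimately have le: "D (vs ! i) \<le> i" using D_le[of "take (Suc i) vs"] i by auto
  have step: "\<forall>j. i \<le> j \<longrightarrow> j < length vs \<longrightarrow> D (vs ! j) \<le> D (vs ! i) + (j - i)"
  proof (intro allI)
    fix j show "i \<le> j \<longrightarrow> j < length vs \<longrightarrow> D (vs ! j) \<le> D (vs ! i) + (j - i)"
    proof (induction j)
      case (Suc j)
      show ?case
      proof (intro impI)
        assume a: "i \<le> Suc j" "Suc j < length vs"
        show "D (vs ! Suc j) \<le> D (vs ! i) + (Suc j - i)"
        proof (cases "i = Suc j")
          case False
          then have "i \<le> j" using a by auto
          have "adj (vs ! j) (vs ! Suc j)" using vs(1) a unfolding is_walk_def by auto
          then have "D (vs ! Suc j) \<le> Suc (D (vs ! j))" by (rule D_adj)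
          with Suc.IH \<open>i \<le> j\<close> a show ?thesis by auto
        qed auto
      qed
    qed auto
  qed
  have "D v = D (vs ! (length vs - 1))" using vs ne by (simp add: last_conv_nth)
  also have "\<dots> \<le> D (vs ! i) + (length vs - 1 - i)" using step[rule_format, of "length vs - 1"] i by simp
  finally have "i \<le> D (vs ! i)" using vs(4) i by auto
  with le show ?thesis by auto
qed

lemma D_path_distinct:
  assumes vs: "is_walk adj vs" "hd vs = x" "last vs = v" "length vs = Suc (D v)"
  shows "distinct vs"
  unfolding distinct_conv_nth using D_path[OF vs] by metis

end

context tp begin

lemma no_cycle:
  assumes aP: "a \<in> P" and bP: "b \<in> P" and ab: "a \<noteq> b" and Dab: "D a = D b"
    and m: "is_walk adj (a # m @ [b])" "distinct m" "\<forall>z\<in>set m. D z = Suc (D a)"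
  shows False
proof -
  define k where "k = D a"
  obtain pa where pa: "is_walk adj pa" "hd pa = x" "last pa = a" "length pa = Suc (D a)"
    using D_walk aP by blast
  obtain pb where pb: "is_walk adj pb" "hd pb = x" "last pb = b" "length pb = Suc (D b)"
    using D_walk bP by blast
  have la: "length pa = Suc k" and lb: "length pb = Suc k" using pa pb Dab k_def by auto
  have Dpa: "\<And>j. j < Suc k \<Longrightarrow> D (pa ! j) = j" using D_path[OF pa] la by auto
  have Dpb: "\<And>j. j < Suc k \<Longrightarrow> D (pb ! j) = j" using D_path[OF pb] lb by auto
  have pak: "pa ! k = a" proof - have "pa \<noteq> []" using la by auto then show ?thesis using pa(3) la by (simp add: last_conv_nth) qed
  have pbk: "pb ! k = b" proof - have "pb \<noteq> []" using lb by auto then show ?thesis using pb(3) lb by (simp add: last_conv_nth) qed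
  define S where "S = {i. i \<le> k \<and> pa ! i = pb ! i}"
  have "pa \<noteq> []" "pb \<noteq> []" using la lb by auto
  then have "pa ! 0 = pb ! 0" using pa(2) pb(2) hd_conv_nth by metis
  then have "0 \<in> S" unfolding S_def by auto
  have finS: "finite S" unfolding S_def by auto
  define i where "i = Max S"
  have iS: "i \<in> S" using finS \<open>0 \<in> S\<close> i_def Max_in by blast
  have imax: "\<And>j. j \<in> S \<Longrightarrow> j \<le> i" using finS i_def by auto
  have "i \<noteq> k" using iS pak pbk ab unfolding S_def by auto
  then have ik: "i < k" using iS unfolding S_def by auto
  have pai: "pa ! i = pb ! i" using iS unfolding S_def by auto
  define A where "A = drop i pa"
  define R where "R = rev (drop (Suc i) pb)"
  define cyc where "cyc = A @ m @ R"
  have Ane: "A \<noteq> []" and Rne: "R \<noteq> []" using ik la lb A_def R_def by auto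
  have walkA: "is_walk adj A" using is_walk_drop[OF pa(1)] ik la A_def by auto
  have walkR: "is_walk adj R" unfolding R_def
    using is_walk_rev[of adj, OF adj_sym] is_walk_drop[OF pb(1), of "Suc i"] ik lb by auto
  have lastA: "last A = a" using pa la ik A_def by auto
  have hdR: "hd R = b" using pb lb ik R_def by (simp add: hd_rev)
  have hdA: "hd A = pa ! i" using A_def la ik by (simp add: hd_drop_conv_nth)
  have lastR: "last R = pb ! Suc i" using R_def lb ik by (simp add: last_rev hd_drop_conv_nth)
  have walk_mR: "is_walk adj (m @ R) \<and> (adj a (hd (m @ R)))"
  proof (cases "m = []")
    case True
    then show ?thesis using m(1) walkR hdR by simp
  next
    case False
    have "is_walk adj ((a # m) @ [b])" using m(1) by simp
    then have w: "is_walk adj (a # m)" "adj (last (a # m)) b" using is_walk_append[of "a#m" "[b]"] by auto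
    have "is_walk adj m" using is_walk_drop[OF w(1), of 1] False by auto
    moreover have "adj a (hd m)" using w(1) False by (cases m) auto
    moreover have "adj (last m) (hd R)" using w(2) False hdR by simp
    ultimately show ?thesis using False Rne walkR by (simp add: is_walk_append)
  qed
  have walk: "is_walk adj cyc" unfolding cyc_def using walk_mR walkA Ane lastA
    by (subst is_walk_append) auto
  have DA: "\<exists>j. i \<le> j \<and> j \<le> k \<and> pa ! j = z \<and> D z = j" if z: "z \<in> set A" for z
  proof -
    have z': "z \<in> set (drop i pa)" using z unfolding A_def .
    obtain j where j: "i \<le> j" "j < length pa" "pa ! j = z" using in_set_dropE[OF z'] by blast
    then have "D z = j" using Dpa la by auto
    then show ?thesis using j la by auto
  qed
  have DR: "\<exists>j. Suc i \<le> j \<and> j \<le> k \<and> pb ! j = z \<and> D z = j" if z: "z \<in> set R" for z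
  proof -
    have "z \<in> set (drop (Suc i) pb)" using z unfolding R_def by simp
    from in_set_dropE[OF this] obtain j where j: "Suc i \<le> j" "j < length pb" "pb ! j = z" by blast
    then have "D z = j" using Dpb lb by auto
    then show ?thesis using j lb by auto
  qed
  have dA: "distinct A" using D_path_distinct[OF pa] A_def by simp
  have dR: "distinct R" using D_path_distinct[OF pb] R_def by simp
  have AR: "set A \<inter> set R = {}"
  proof (rule ccontr)
    assume "set A \<inter> set R \<noteq> {}"
    then obtain z where z: "z \<in> set A" "z \<in> set R" by auto
    obtain j where j: "i \<le> j" "j \<le> k" "pa ! j = z" "D z = j" using DA z(1) by blast
    obtain j' where j': "Suc i \<le> j'" "j' \<le> k" "pb ! j' = z" "D z = j'" using DR z(2) by blast
    have "j \<in> S" using j j' unfolding S_def by auto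
    then have "j \<le> i" using imax by blast
    then show False using j j' by linarith
  qed
  have Am: "set A \<inter> set m = {}"
  proof -
    { fix z assume "z \<in> set A" "z \<in> set m"
      then have False using DA[of z] m(3) k_def by fastforce }
    then show ?thesis by blast
  qed
  have Rm: "set R \<inter> set m = {}"
  proof -
    { fix z assume "z \<in> set R" "z \<in> set m"
      then have False using DR[of z] m(3) k_def by fastforce }
    then show ?thesis by blast
  qed
  have dist: "distinct cyc" unfolding cyc_def using dA dR m(2) AR Am Rm by auto
  have "length A = Suc k - i" "length R = k - i" using A_def R_def la lb by auto
  then have len: "length cyc \<ge> 3" unfolding cyc_def using ik by auto
  have "adj (pb ! i) (pb ! Suc i)" using pb(1) lb ik unfolding is_walk_def by auto
  then have "adj (pb ! Suc i) (pb ! i)" by (rule adj_sym)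
  then have "adj (last cyc) (hd cyc)" unfolding cyc_def using Ane Rne lastR hdA pai by simp
  then show False using tree len dist walk unfolding tree_poset_def graph_acyclic_def by blast
qed

definition par :: "'a set \<Rightarrow> 'a set" where
  "par u = (SOME w. adj u w \<and> Suc (D w) = D u)"

lemma par_props: assumes "u \<in> P" "u \<noteq> x" shows "adj u (par u) \<and> Suc (D (par u)) = D u"
proof -
  obtain vs where vs: "is_walk adj vs" "hd vs = x" "last vs = u" "length vs = Suc (D u)"
    using D_walk assms by blast
  have "D u \<noteq> 0" using D_0 assms by auto
  then obtain k where k: "D u = Suc k" by (cases "D u") auto
  have "adj (vs ! k) (vs ! Suc k)" using vs k unfolding is_walk_def by auto
  moreover have "vs ! Suc k = u"
  proof -
    have "vs \<noteq> []" using vs by auto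
    then show ?thesis using vs k by (simp add: last_conv_nth)
  qed
  moreover have "D (vs ! k) = k" using D_path[OF vs] vs k by auto
  ultimately have "adj u (vs ! k) \<and> Suc (D (vs ! k)) = D u" using k adj_sym[of "vs ! k" u] by auto
  then show ?thesis unfolding par_def by (rule someI)
qed

lemma par_unique: assumes "u \<in> P" "adj u w" "Suc (D w) = D u" shows "par u = w"
proof (rule ccontr)
  assume ne: "par u \<noteq> w"
  have "u \<noteq> x" using assms D_x by auto
  then have p: "adj u (par u)" "Suc (D (par u)) = D u" using par_props assms by auto
  have "par u \<in> P" "w \<in> P" using p(1) assms(2) adj_P by auto
  moreover have "adj (par u) u" using p(1) by (rule adj_sym)
  ultimately show False
    using no_cycle[of "par u" w "[u]"] ne p assms by auto
qed

lemma edge_dist: assumes "adj a b" shows "D a = Suc (D b) \<or> D b = Suc (D a)"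
proof -
  have "D b \<le> Suc (D a)" using D_adj assms by auto
  moreover have "D a \<le> Suc (D b)" using D_adj adj_sym[OF assms] by auto
  moreover have "D a \<noteq> D b"
  proof
    assume "D a = D b"
    moreover have "a \<in> P" "b \<in> P" "a \<noteq> b" using assms adj_P adj_neq by auto
    ultimately show False using no_cycle[of a b "[]"] assms by auto
  qed
  ultimately show ?thesis by auto
qed

lemma le_rtranclp:
  assumes "a \<in> P" "b \<in> P" "a \<subseteq> b"
  shows "(hasse_edge P (\<subseteq>))\<^sup>*\<^sup>* a b"
proof -
  have "\<forall>a b. card {c\<in>P. a \<subseteq> c \<and> c \<subseteq> b} = n \<longrightarrow> a \<in> P \<longrightarrow> b \<in> P \<longrightarrow> a \<subseteq> b \<longrightarrow>
        (hasse_edge P (\<subseteq>))\<^sup>*\<^sup>* a b" for n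
  proof (induction n rule: less_induct)
    case (less n)
    show ?case
    proof (intro allI impI)
      fix a b assume n: "card {c\<in>P. a \<subseteq> c \<and> c \<subseteq> b} = n" and ab: "a \<in> P" "b \<in> P" "a \<subseteq> b"
      show "(hasse_edge P (\<subseteq>))\<^sup>*\<^sup>* a b"
      proof (cases "a = b")
        case False
        show ?thesis
        proof (cases "\<exists>c. strict_between P (\<subseteq>) a c b")
          case True
          then obtain c where c: "c \<in> P" "a \<subseteq> c" "c \<subseteq> b" "c \<noteq> a" "c \<noteq> b"
            unfolding strict_between_def by auto
          have fin: "finite {c\<in>P. a \<subseteq> c \<and> c \<subseteq> b}" using finP by auto
          have s1: "{c'\<in>P. a \<subseteq> c' \<and> c' \<subseteq> c} \<subseteq> {c\<in>P. a \<subseteq> c \<and> c \<subseteq> b}"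
            using c(3) by blast
          have s2: "b \<in> {c\<in>P. a \<subseteq> c \<and> c \<subseteq> b}" using ab by blast
          have s3: "b \<notin> {c'\<in>P. a \<subseteq> c' \<and> c' \<subseteq> c}" using c(3) c(5) by blast
          have ps1: "{c'\<in>P. a \<subseteq> c' \<and> c' \<subseteq> c} \<subset> {c\<in>P. a \<subseteq> c \<and> c \<subseteq> b}"
            using s1 s2 s3 by blast
          have 1: "card {c'\<in>P. a \<subseteq> c' \<and> c' \<subseteq> c} < n" using psubset_card_mono[OF fin ps1] n by simp
          have t1: "{c'\<in>P. c \<subseteq> c' \<and> c' \<subseteq> b} \<subseteq> {c\<in>P. a \<subseteq> c \<and> c \<subseteq> b}"
            using c(2) by blast
          have t2: "a \<in> {c\<in>P. a \<subseteq> c \<and> c \<subseteq> b}" using ab by blast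
          have t3: "a \<notin> {c'\<in>P. c \<subseteq> c' \<and> c' \<subseteq> b}" using c(2) c(4) by blast
          have ps2: "{c'\<in>P. c \<subseteq> c' \<and> c' \<subseteq> b} \<subset> {c\<in>P. a \<subseteq> c \<and> c \<subseteq> b}"
            using t1 t2 t3 by blast
          have 2: "card {c'\<in>P. c \<subseteq> c' \<and> c' \<subseteq> b} < n" using psubset_card_mono[OF fin ps2] n by simp
          have "(hasse_edge P (\<subseteq>))\<^sup>*\<^sup>* a c" using less.IH[OF 1, rule_format, OF refl] ab c by simp
          moreover have "(hasse_edge P (\<subseteq>))\<^sup>*\<^sup>* c b" using less.IH[OF 2, rule_format, OF refl] ab c by simp
          ultimately show ?thesis by (rule rtranclp_trans)
        next
          case False
          then have "hasse_edge P (\<subseteq>) a b" unfolding hasse_edge_def using ab \<open>a \<noteq> b\<close> by auto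
          then show ?thesis by auto
        qed
      qed auto
    qed
  qed
  then show ?thesis using assms by simp
qed

end

declare dropWhile_eq_Nil_conv[simp del]

definition cands :: "'v \<Rightarrow> nat \<Rightarrow> ('v \<Rightarrow> 'v) \<Rightarrow> ('v \<Rightarrow> nat) \<Rightarrow> 'v \<Rightarrow> nat list" where
  "cands x d par c u = (if u = x then [0] else map (\<lambda>t. c (par u) * d + t) [0..<d])"

fun dfs :: "'v \<Rightarrow> nat \<Rightarrow> ('v \<Rightarrow> 'v) \<Rightarrow> ('v \<times> nat \<Rightarrow> bool) \<Rightarrow> 'v list \<Rightarrow> ('v \<Rightarrow> nat)
    \<Rightarrow> ('v \<Rightarrow> nat) \<times> ('v \<times> nat) set \<times> bool" where
  "dfs x d par pos [] c = (c, {}, True)"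
| "dfs x d par pos (u # ws) c =
     (case dropWhile (\<lambda>j. \<not> pos (u, j)) (cands x d par c u) of
        [] \<Rightarrow> (c, Pair u ` set (takeWhile (\<lambda>j. \<not> pos (u, j)) (cands x d par c u)), False)
      | j # _ \<Rightarrow> (case dfs x d par pos ws (c(u := j)) of (c', Q, ok) \<Rightarrow>
           (c', Pair u ` set (takeWhile (\<lambda>j. \<not> pos (u, j)) (cands x d par c u)) \<union> {(u, j)} \<union> Q, ok)))"

lemma tw_local:
  assumes "\<forall>j\<in>set (takeWhile p xs). p' j = p j" "\<forall>j r. dropWhile p xs = j # r \<longrightarrow> p' j = p j"
  shows "takeWhile p' xs = takeWhile p xs \<and> dropWhile p' xs = dropWhile p xs"
  using assms by (induction xs) auto

lemma cands_mem: "j \<in> set (cands x d par c u) \<Longrightarrow> u \<noteq> x \<Longrightarrow> \<exists>t<d. j = c (par u) * d + t"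
proof -
  assume a: "j \<in> set (cands x d par c u)" "u \<noteq> x"
  then have "c (par u) * d \<le> j" "j < d + c (par u) * d" by (auto simp: cands_def)
  then show ?thesis by (intro exI[of _ "j - c (par u) * d"]) auto
qed

lemma cands_mem2: "u \<noteq> x \<Longrightarrow> t < d \<Longrightarrow> c (par u) * d + t \<in> set (cands x d par c u)"
  by (auto simp: cands_def)

lemma dfs_cons_nil:
  "dropWhile (\<lambda>j. \<not> pos (u, j)) (cands x d par c u) = [] \<Longrightarrow>
   dfs x d par pos (u # ws) c = (c, Pair u ` set (takeWhile (\<lambda>j. \<not> pos (u, j)) (cands x d par c u)), False)"
  by simp

lemma dfs_cons_some:
  "dropWhile (\<lambda>j. \<not> pos (u, j)) (cands x d par c u) = j # r \<Longrightarrow>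
   dfs x d par pos ws (c(u := j)) = (c1, Q1, ok1) \<Longrightarrow>
   dfs x d par pos (u # ws) c = (c1, Pair u ` set (takeWhile (\<lambda>j. \<not> pos (u, j)) (cands x d par c u)) \<union> {(u, j)} \<union> Q1, ok1)"
  by simp

lemma dfs_cons_nilE:
  assumes "dfs x d par pos (u # ws) c = (c', Q, ok)" "dropWhile (\<lambda>j. \<not> pos (u, j)) (cands x d par c u) = []"
  shows "c' = c \<and> Q = Pair u ` set (takeWhile (\<lambda>j. \<not> pos (u, j)) (cands x d par c u)) \<and> ok = False"
  using assms(1) dfs_cons_nil[OF assms(2), of ws] by simp

lemma dfs_cons_someE:
  assumes "dfs x d par pos (u # ws) c = (c', Q, ok)" "dropWhile (\<lambda>j. \<not> pos (u, j)) (cands x d par c u) = j # r"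
  obtains Q1 where "dfs x d par pos ws (c(u := j)) = (c', Q1, ok)"
    "Q = Pair u ` set (takeWhile (\<lambda>j. \<not> pos (u, j)) (cands x d par c u)) \<union> {(u, j)} \<union> Q1"
proof -
  obtain c1 Q1 ok1 where e: "dfs x d par pos ws (c(u := j)) = (c1, Q1, ok1)"
    by (cases "dfs x d par pos ws (c(u := j))") auto
  have "(c', Q, ok) = (c1, Pair u ` set (takeWhile (\<lambda>j. \<not> pos (u, j)) (cands x d par c u)) \<union> {(u, j)} \<union> Q1, ok1)"
    using assms(1) dfs_cons_some[OF assms(2) e] by simp
  then show ?thesis using that e by simp
qed

lemma dfs_c_unchanged:
  "dfs x d par pos ws c = (c', Q, ok) \<Longrightarrow> v \<notin> set ws \<Longrightarrow> c' v = c v"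
proof (induction ws arbitrary: c c' Q ok)
  case (Cons u ws)
  show ?case
  proof (cases "dropWhile (\<lambda>j. \<not> pos (u, j)) (cands x d par c u)")
    case Nil
    then show ?thesis using dfs_cons_nilE[OF Cons.prems(1)] by simp
  next
    case (Cons j r)
    obtain Q1 where e: "dfs x d par pos ws (c(u := j)) = (c', Q1, ok)"
      using dfs_cons_someE[OF Cons.prems(1) Cons] by blast
    have "v \<notin> set ws" "v \<noteq> u" using Cons.prems(2) by auto
    then have "c' v = (c(u := j)) v" using Cons.IH[OF e] by blast
    then show ?thesis using \<open>v \<noteq> u\<close> by simp
  qed
qed simp

lemma dfs_local:
  "dfs x d par pos ws c = (c', Q, ok) \<Longrightarrow> (\<forall>p\<in>Q. pos' p = pos p) \<Longrightarrow> dfs x d par pos' ws c = (c', Q, ok)"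
proof (induction ws arbitrary: c c' Q ok)
  case (Cons u ws)
  define cs where "cs = cands x d par c u"
  define p where "p = (\<lambda>j. \<not> pos (u, j))"
  define p' where "p' = (\<lambda>j. \<not> pos' (u, j))"
  show ?case
  proof (cases "dropWhile p cs")
    case Nil
    have Q: "c' = c" "Q = Pair u ` set (takeWhile p cs)" "ok = False"
      using dfs_cons_nilE[OF Cons.prems(1)] Nil unfolding p_def cs_def by auto
    have "\<forall>j\<in>set (takeWhile p cs). p' j = p j" using Cons.prems(2) Q unfolding p_def p'_def by auto
    then have tw: "takeWhile p' cs = takeWhile p cs \<and> dropWhile p' cs = dropWhile p cs"
      using tw_local Nil by (metis list.distinct(1))
    have "dropWhile p' cs = []" using tw Nil by simp
    then have "dfs x d par pos' (u # ws) c = (c, Pair u ` set (takeWhile p' cs), False)"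
      unfolding p'_def cs_def by (rule dfs_cons_nil)
    then show ?thesis using tw Q by simp
  next
    case (Cons j r)
    obtain Q1 where e: "dfs x d par pos ws (c(u := j)) = (c', Q1, ok)"
      and Q: "Q = Pair u ` set (takeWhile p cs) \<union> {(u, j)} \<union> Q1"
      using dfs_cons_someE[OF Cons.prems(1)] Cons unfolding p_def cs_def by blast
    have "\<forall>j\<in>set (takeWhile p cs). p' j = p j" using Cons.prems(2) Q unfolding p_def p'_def by auto
    moreover have "\<forall>j' r'. dropWhile p cs = j' # r' \<longrightarrow> p' j' = p j'"
      using Cons.prems(2) Q Cons unfolding p_def p'_def by auto
    ultimately have tw: "takeWhile p' cs = takeWhile p cs \<and> dropWhile p' cs = dropWhile p cs"
      using tw_local by blast
    have "\<forall>p\<in>Q1. pos' p = pos p" using Cons.prems(2) Q by blast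
    then have e': "dfs x d par pos' ws (c(u := j)) = (c', Q1, ok)" by (rule Cons.IH[OF e])
    have "dropWhile p' cs = j # r" using tw Cons by simp
    then have "dfs x d par pos' (u # ws) c = (c', Pair u ` set (takeWhile p' cs) \<union> {(u, j)} \<union> Q1, ok)"
      using e' unfolding p'_def cs_def by (rule dfs_cons_some)
    then show ?thesis using tw Q by simp
  qed
qed simp

lemma dfs_finite: "dfs x d par pos ws c = (c', Q, ok) \<Longrightarrow> finite Q"
proof (induction ws arbitrary: c c' Q ok)
  case (Cons u ws)
  show ?case
  proof (cases "dropWhile (\<lambda>j. \<not> pos (u, j)) (cands x d par c u)")
    case Nil
    then show ?thesis using dfs_cons_nilE[OF Cons.prems(1)] by simp
  next
    case (Cons j r)
    obtain Q1 where e: "dfs x d par pos ws (c(u := j)) = (c', Q1, ok)"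
      and Q: "Q = Pair u ` set (takeWhile (\<lambda>j. \<not> pos (u, j)) (cands x d par c u)) \<union> {(u, j)} \<union> Q1"
      using dfs_cons_someE[OF Cons.prems(1) Cons] by blast
    have "finite Q1" by (rule Cons.IH[OF e])
    then show ?thesis using Q by simp
  qed
qed simp

lemma dfs_cost: "dfs x d par pos ws c = (c', Q, ok) \<Longrightarrow> card {p\<in>Q. pos p} \<le> length ws"
proof (induction ws arbitrary: c c' Q ok)
  case (Cons u ws)
  define cs where "cs = cands x d par c u"
  have neg: "{p \<in> Pair u ` set (takeWhile (\<lambda>j. \<not> pos (u, j)) cs). pos p} = {}"
    by (auto dest: set_takeWhileD)
  show ?case
  proof (cases "dropWhile (\<lambda>j. \<not> pos (u, j)) cs")
    case Nil
    then have QQ: "Q = Pair u ` set (takeWhile (\<lambda>j. \<not> pos (u, j)) cs)"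
      using dfs_cons_nilE[OF Cons.prems(1)] unfolding cs_def by simp
    have e0: "{p\<in>Q. pos p} = {}" unfolding QQ by (rule neg)
    show ?thesis unfolding e0 by simp
  next
    case (Cons j r)
    obtain Q1 where e: "dfs x d par pos ws (c(u := j)) = (c', Q1, ok)"
      and Q: "Q = Pair u ` set (takeWhile (\<lambda>j. \<not> pos (u, j)) cs) \<union> {(u, j)} \<union> Q1"
      using dfs_cons_someE[OF Cons.prems(1)] Cons unfolding cs_def by blast
    have fin: "finite Q1" using dfs_finite[OF e] .
    have "{p\<in>Q. pos p} \<subseteq> insert (u, j) {p\<in>Q1. pos p}"
    proof
      fix p assume p: "p \<in> {p\<in>Q. pos p}"
      show "p \<in> insert (u, j) {p\<in>Q1. pos p}"
      proof (cases "p \<in> Pair u ` set (takeWhile (\<lambda>j. \<not> pos (u, j)) cs)")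
        case True
        then obtain j' where j': "j' \<in> set (takeWhile (\<lambda>j. \<not> pos (u, j)) cs)" "p = (u, j')" by blast
        have "\<not> pos (u, j')" using set_takeWhileD[OF j'(1)] by simp
        then show ?thesis using p j'(2) by simp
      next
        case False
        have "p \<in> Q" "pos p" using p by auto
        then show ?thesis using False unfolding Q by auto
      qed
    qed
    then have "card {p\<in>Q. pos p} \<le> card (insert (u, j) {p\<in>Q1. pos p})"
      using fin by (intro card_mono) auto
    also have "\<dots> \<le> Suc (card {p\<in>Q1. pos p})" by (rule card_insert_le_m1) auto
    also have "\<dots> \<le> Suc (length ws)" using Cons.IH[OF e] by simp
    finally show ?thesis by simp
  qed
qed simp

lemma dfs_fail:
  "dfs x d par pos ws c = (c', Q, False) \<Longrightarrow> x \<notin> set ws \<Longrightarrow>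
   \<exists>u\<in>set ws. u \<noteq> x \<and> (\<exists>b. (\<lambda>t. (u, b * d + t)) ` {..<d} \<subseteq> Q)"
proof (induction ws arbitrary: c c' Q)
  case (Cons u ws)
  define cs where "cs = cands x d par c u"
  have ux: "u \<noteq> x" using Cons.prems(2) by auto
  show ?case
  proof (cases "dropWhile (\<lambda>j. \<not> pos (u, j)) cs")
    case Nil
    then have "Q = Pair u ` set (takeWhile (\<lambda>j. \<not> pos (u, j)) cs)"
      using dfs_cons_nilE[OF Cons.prems(1)] unfolding cs_def by simp
    moreover have "takeWhile (\<lambda>j. \<not> pos (u, j)) cs = cs" using Nil by (simp add: dropWhile_eq_Nil_conv)
    moreover have "(\<lambda>t. (u, c (par u) * d + t)) ` {..<d} \<subseteq> Pair u ` set cs"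
    proof (rule image_subsetI)
      fix t assume "t \<in> {..<d}"
      then have "c (par u) * d + t \<in> set cs" using cands_mem2[OF ux] unfolding cs_def by simp
      then show "(u, c (par u) * d + t) \<in> Pair u ` set cs" by (rule imageI)
    qed
    ultimately have "(\<lambda>t. (u, c (par u) * d + t)) ` {..<d} \<subseteq> Q" by simp
    then show ?thesis using ux by (metis list.set_intros(1))
  next
    case (Cons j r)
    obtain Q1 where e: "dfs x d par pos ws (c(u := j)) = (c', Q1, False)"
      and Q: "Q = Pair u ` set (takeWhile (\<lambda>j. \<not> pos (u, j)) cs) \<union> {(u, j)} \<union> Q1"
      using dfs_cons_someE[OF Cons.prems(1)] Cons unfolding cs_def by blast
    have "x \<notin> set ws" using Cons.prems(2) by simp
    from Cons.IH[OF e this] obtain w b where w: "w \<in> set ws" "w \<noteq> x" "(\<lambda>t. (w, b * d + t)) ` {..<d} \<subseteq> Q1"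
      by blast
    have "(\<lambda>t. (w, b * d + t)) ` {..<d} \<subseteq> Q" using w(3) Q by blast
    then show ?thesis using w(1,2) by (metis list.set_intros(2))
  qed
qed simp

lemma dfs_ok:
  "dfs x d par pos ws c = (c', Q, True) \<Longrightarrow> distinct ws \<Longrightarrow> sorted_wrt (\<lambda>a b. a \<noteq> x \<longrightarrow> par a \<noteq> b) ws \<Longrightarrow>
   (\<forall>u\<in>set ws. u \<noteq> x \<longrightarrow> par u \<noteq> u) \<Longrightarrow>
   \<forall>u\<in>set ws. (u, c' u) \<in> Q \<and> pos (u, c' u) \<and> (u \<noteq> x \<longrightarrow> (\<exists>t<d. c' u = c' (par u) * d + t))"
proof (induction ws arbitrary: c c' Q)
  case (Cons u ws)
  define cs where "cs = cands x d par c u"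
  show ?case
  proof (cases "dropWhile (\<lambda>j. \<not> pos (u, j)) cs")
    case Nil
    then show ?thesis using dfs_cons_nilE[OF Cons.prems(1)] unfolding cs_def by simp
  next
    case (Cons j r)
    obtain Q1 where e: "dfs x d par pos ws (c(u := j)) = (c', Q1, True)"
      and Q: "Q = Pair u ` set (takeWhile (\<lambda>j. \<not> pos (u, j)) cs) \<union> {(u, j)} \<union> Q1"
      using dfs_cons_someE[OF Cons.prems(1)] Cons unfolding cs_def by blast
    have pre: "distinct ws" "sorted_wrt (\<lambda>a b. a \<noteq> x \<longrightarrow> par a \<noteq> b) ws" "\<forall>u\<in>set ws. u \<noteq> x \<longrightarrow> par u \<noteq> u"
      using Cons.prems(2-4) by auto
    have IH: "\<forall>w\<in>set ws. (w, c' w) \<in> Q1 \<and> pos (w, c' w) \<and> (w \<noteq> x \<longrightarrow> (\<exists>t<d. c' w = c' (par w) * d + t))"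
      using Cons.IH[OF e pre] .
    have uws: "u \<notin> set ws" using Cons.prems(2) by auto
    have c1u: "c' u = j" using dfs_c_unchanged[OF e uws] by simp
    have jin: "j \<in> set cs" using Cons by (metis list.set_intros(1) set_dropWhileD)
    have posj: "pos (u, j)" using hd_dropWhile[of "\<lambda>j. \<not> pos (u, j)" cs] Cons by simp
    have "u \<noteq> x \<longrightarrow> (\<exists>t<d. c' u = c' (par u) * d + t)"
    proof
      assume ux: "u \<noteq> x"
      then obtain t where t: "t < d" "j = c (par u) * d + t" using cands_mem[OF jin[unfolded cs_def] ux] by blast
      have "par u \<notin> set ws" using Cons.prems(3) ux by auto
      then have "c' (par u) = (c(u := j)) (par u)" using dfs_c_unchanged[OF e] by blast
      also have "\<dots> = c (par u)" using Cons.prems(4) ux by auto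
      finally show "\<exists>t<d. c' u = c' (par u) * d + t" using t c1u by auto
    qed
    then show ?thesis using IH Q c1u posj by auto
  qed
qed simp

lemma dfs_root:
  assumes "dfs x d par pos (x # ws) c = (c', Q, ok)"
  shows "(x, 0) \<in> Q"
proof (cases "pos (x, 0)")
  case True
  then have "dropWhile (\<lambda>j. \<not> pos (x, j)) (cands x d par c x) = [0]" by (simp add: cands_def)
  then show ?thesis using assms by (auto split: prod.splits)
next
  case False
  then have "dropWhile (\<lambda>j. \<not> pos (x, j)) (cands x d par c x) = []"
    "takeWhile (\<lambda>j. \<not> pos (x, j)) (cands x d par c x) = [0]" by (simp_all add: cands_def)
  then show ?thesis using assms by auto
qed

lemma dfs_root_fail:
  assumes "dfs x d par pos (x # ws) c = (c', Q, False)" "x \<notin> set ws" "\<exists>p\<in>Q. pos p"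
  shows "\<exists>u b. u \<noteq> x \<and> insert (x, 0) ((\<lambda>t. (u, b * d + t)) ` {..<d}) \<subseteq> Q"
proof (cases "pos (x, 0)")
  case True
  then have dw: "dropWhile (\<lambda>j. \<not> pos (x, j)) (cands x d par c x) = [0]"
    "takeWhile (\<lambda>j. \<not> pos (x, j)) (cands x d par c x) = []" by (simp_all add: cands_def)
  obtain c1 Q1 ok1 where e: "dfs x d par pos ws (c(x := 0)) = (c1, Q1, ok1)"
    by (cases "dfs x d par pos ws (c(x := 0))") auto
  have eq: "dfs x d par pos (x # ws) c = (c1, insert (x, 0) Q1, ok1)"
    using dfs_cons_some[OF dw(1) e] dw(2) by simp
  have Q: "Q = insert (x, 0) Q1" "ok1 = False" using assms(1) eq by auto
  then have e': "dfs x d par pos ws (c(x := 0)) = (c1, Q1, False)" using e by simp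
  from dfs_fail[OF e' assms(2)] obtain w b where "w \<noteq> x" "(\<lambda>t. (w, b * d + t)) ` {..<d} \<subseteq> Q1"
    by blast
  then show ?thesis using Q by blast
next
  case False
  then have "dropWhile (\<lambda>j. \<not> pos (x, j)) (cands x d par c x) = []"
    "takeWhile (\<lambda>j. \<not> pos (x, j)) (cands x d par c x) = [0]" by (simp_all add: cands_def)
  then have "Q = {(x, 0)}" using assms(1) by auto
  then show ?thesis using assms(3) False by auto
qed


lemma arith_aux: "(c::nat) < m \<Longrightarrow> t < d \<Longrightarrow> c * d + t < m * d"
proof -
  assume a: "c < m" "t < d"
  have "c * d + t < c * d + d" using a by simp
  also have "\<dots> = Suc c * d" by simp
  also have "\<dots> \<le> m * d" using a by (intro mult_le_mono1) simp
  finally show ?thesis .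
qed

lemma dfs_carrier:
  assumes "dfs x d par pos ws c = (c', Q, ok)"
    "\<forall>u\<in>set ws. u \<in> V \<and> (u \<noteq> x \<longrightarrow> par u \<in> V \<and> Suc (Dd (par u)) = Dd u)"
    "Dd x = 0" "\<forall>v\<in>V. 0 < d \<longrightarrow> c v < d ^ Dd v"
  shows "\<forall>p\<in>Q. fst p \<in> V \<and> snd p < d ^ Dd (fst p)"
  using assms
proof (induction ws arbitrary: c c' Q ok)
  case (Cons u ws)
  define cs where "cs = cands x d par c u"
  have uV: "u \<in> V" using Cons.prems by auto
  have csok: "j < d ^ Dd u" if j: "j \<in> set cs" for j
  proof (cases "u = x")
    case True
    then show ?thesis using j Cons.prems(3) unfolding cs_def cands_def by simp
  next
    case False
    then obtain t where t: "t < d" "j = c (par u) * d + t" using cands_mem[OF j[unfolded cs_def] False] by blast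
    have pu: "par u \<in> V" "Suc (Dd (par u)) = Dd u" using Cons.prems(2) False by auto
    have "c (par u) < d ^ Dd (par u)" using Cons.prems(4) pu t by auto
    then have "j < d ^ Dd (par u) * d" using t arith_aux by simp
    then show ?thesis using pu(2) by (metis power_Suc2)
  qed
  show ?case
  proof (cases "dropWhile (\<lambda>j. \<not> pos (u, j)) cs")
    case Nil
    then have "Q = Pair u ` set (takeWhile (\<lambda>j. \<not> pos (u, j)) cs)"
      using dfs_cons_nilE[OF Cons.prems(1)] unfolding cs_def by simp
    then show ?thesis using csok uV by (auto dest: set_takeWhileD)
  next
    case (Cons j r)
    obtain Q1 where e: "dfs x d par pos ws (c(u := j)) = (c', Q1, ok)"
      and Q: "Q = Pair u ` set (takeWhile (\<lambda>j. \<not> pos (u, j)) cs) \<union> {(u, j)} \<union> Q1"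
      using dfs_cons_someE[OF Cons.prems(1)] Cons unfolding cs_def by blast
    have jin: "j \<in> set cs" using Cons by (metis list.set_intros(1) set_dropWhileD)
    have inv: "\<forall>v\<in>V. 0 < d \<longrightarrow> (c(u := j)) v < d ^ Dd v" using Cons.prems(4) csok jin by auto
    have "\<forall>u\<in>set ws. u \<in> V \<and> (u \<noteq> x \<longrightarrow> par u \<in> V \<and> Suc (Dd (par u)) = Dd u)"
      using Cons.prems(2) by simp
    then have "\<forall>p\<in>Q1. fst p \<in> V \<and> snd p < d ^ Dd (fst p)"
      using Cons.IH[OF e _ Cons.prems(3) inv] by blast
    then show ?thesis using Q csok jin uV by (auto dest: set_takeWhileD)
  qed
qed simp

fun iter :: "('s set \<Rightarrow> 's set \<Rightarrow> 's set) \<Rightarrow> ('s set \<Rightarrow> bool) \<Rightarrow> nat \<Rightarrow> 's set \<Rightarrow> 's set \<Rightarrow> 's set" where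
  "iter st big 0 A Or = A"
| "iter st big (Suc k) A Or = (if big A then iter st big k (A - st A Or) Or else A)"

lemma iter_sub: "iter st big k A Or \<subseteq> A"
proof (induction k arbitrary: A)
  case (Suc k)
  then show ?case by (metis Diff_subset iter.simps(2) order_trans order_refl)
qed simp

lemma iter_small:
  assumes st: "\<And>A Or. A \<subseteq> U \<Longrightarrow> big A \<Longrightarrow> st A Or \<noteq> {} \<and> st A Or \<subseteq> A" and fU: "finite U"
  shows "A \<subseteq> U \<Longrightarrow> card A < k \<Longrightarrow> \<not> big (iter st big k A Or)"
proof (induction k arbitrary: A)
  case (Suc k)
  show ?case
  proof (cases "big A")
    case True
    have s: "st A Or \<noteq> {}" "st A Or \<subseteq> A" using st Suc.prems True by auto
    have fA: "finite A" using Suc.prems fU finite_subset by auto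
    have "A - st A Or \<subset> A" using s by blast
    then have "card (A - st A Or) < card A" using psubset_card_mono[OF fA] by blast
    then have "card (A - st A Or) < k" using Suc.prems by simp
    moreover have "A - st A Or \<subseteq> U" using Suc.prems by blast
    ultimately have "\<not> big (iter st big k (A - st A Or) Or)" using Suc.IH by blast
    then show ?thesis using True by simp
  next
    case False
    then show ?thesis by simp
  qed
qed simp

lemma iter_local:
  assumes st: "\<And>A Or. A \<subseteq> U \<Longrightarrow> big A \<Longrightarrow> st A Or \<subseteq> A"
    and loc: "\<And>A Or Or'. A \<subseteq> U \<Longrightarrow> big A \<Longrightarrow> (\<forall>G\<in>st A Or. G \<in> Or \<longleftrightarrow> G \<in> Or') \<Longrightarrow> st A Or' = st A Or"
  shows "A \<subseteq> U \<Longrightarrow> (\<forall>G\<in>A - iter st big k A Or. G \<in> Or \<longleftrightarrow> G \<in> Or') \<Longrightarrow>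
    iter st big k A Or' = iter st big k A Or"
proof (induction k arbitrary: A)
  case (Suc k)
  show ?case
  proof (cases "big A")
    case True
    define S where "S = st A Or"
    have SA: "S \<subseteq> A" using st Suc.prems True S_def by auto
    have R: "iter st big (Suc k) A Or = iter st big k (A - S) Or" using True S_def by simp
    have Rsub: "iter st big k (A - S) Or \<subseteq> A - S" by (rule iter_sub)
    have "\<forall>G\<in>S. G \<in> Or \<longleftrightarrow> G \<in> Or'" using Suc.prems(2) R Rsub SA by blast
    then have S': "st A Or' = S" using loc[OF Suc.prems(1) True] S_def by blast
    have "\<forall>G\<in>(A - S) - iter st big k (A - S) Or. G \<in> Or \<longleftrightarrow> G \<in> Or'" using Suc.prems(2) R by blast
    moreover have "A - S \<subseteq> U" using Suc.prems by blast
    ultimately have "iter st big k (A - S) Or' = iter st big k (A - S) Or" using Suc.IH by blast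
    then show ?thesis using True S' R by simp
  next
    case False
    then show ?thesis by simp
  qed
qed simp

lemma iter_cost:
  assumes st: "\<And>A. A \<subseteq> U \<Longrightarrow> big A \<Longrightarrow> st A Or \<subseteq> A \<and> card (st A Or \<inter> Or) * m \<le> p * card (st A Or)"
    and fU: "finite U"
  shows "A \<subseteq> U \<Longrightarrow> card (Or \<inter> (A - iter st big k A Or)) * m \<le> p * card (A - iter st big k A Or)"
proof (induction k arbitrary: A)
  case (Suc k)
  show ?case
  proof (cases "big A")
    case True
    define S where "S = st A Or"
    define R where "R = iter st big k (A - S) Or"
    have SA: "S \<subseteq> A" and cS: "card (S \<inter> Or) * m \<le> p * card S" using st Suc.prems True S_def by auto
    have RR: "iter st big (Suc k) A Or = R" using True S_def R_def by simp
    have Rsub: "R \<subseteq> A - S" unfolding R_def by (rule iter_sub)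
    have fA: "finite A" using Suc.prems fU finite_subset by auto
    have IH: "card (Or \<inter> (A - S - R)) * m \<le> p * card (A - S - R)"
      using Suc.IH[of "A - S"] Suc.prems R_def by blast
    have e1: "A - R = S \<union> (A - S - R)" using SA Rsub by blast
    have e2: "Or \<inter> (A - R) = (S \<inter> Or) \<union> (Or \<inter> (A - S - R))" using e1 by blast
    have fS: "finite S" using finite_subset[OF SA fA] .
    have fASR: "finite (A - S - R)" using fA by simp
    have d1: "S \<inter> (A - S - R) = {}" by blast
    have c1: "card (A - R) = card S + card (A - S - R)"
      unfolding e1 using card_Un_disjoint[OF fS fASR d1] .
    have fSO: "finite (S \<inter> Or)" using fS by simp
    have fOASR: "finite (Or \<inter> (A - S - R))" using fASR by simp
    have d2: "(S \<inter> Or) \<inter> (Or \<inter> (A - S - R)) = {}" by blast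
    have c2: "card (Or \<inter> (A - R)) = card (S \<inter> Or) + card (Or \<inter> (A - S - R))"
      unfolding e2 using card_Un_disjoint[OF fSO fOASR d2] .
    have "card (Or \<inter> (A - R)) * m \<le> p * card (A - R)"
      using c1 c2 cS IH by (simp add: algebra_simps)
    then show ?thesis using RR by simp
  next
    case False
    then show ?thesis by simp
  qed
qed simp

lemma rtranclp_map: "R\<^sup>*\<^sup>* a b \<Longrightarrow> (\<And>s t. R s t \<Longrightarrow> S (g s) (g t)) \<Longrightarrow> S\<^sup>*\<^sup>* (g a) (g b)"
proof (induction rule: rtranclp_induct)
  case (step y z)
  then show ?case by (meson rtranclp.rtrancl_into_rtrancl)
qed simp

lemma div_aux: "(t::nat) < d \<Longrightarrow> (c * d + t) div d = c"
  by simp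

context tp begin

lemma embed:
  assumes inj: "inj_on \<phi> (blowup_carrier P (\<subseteq>) x d)"
    and mono: "\<forall>a\<in>blowup_carrier P (\<subseteq>) x d. \<forall>b\<in>blowup_carrier P (\<subseteq>) x d.
                 blowup_le P (\<subseteq>) x d a b \<longrightarrow> \<phi> a \<subseteq> \<phi> b"
    and c: "\<forall>u\<in>P. (u, c u) \<in> blowup_carrier P (\<subseteq>) x d \<and> \<phi> (u, c u) \<in> Or \<and>
               (u \<noteq> x \<longrightarrow> (\<exists>t<d. c u = c (par u) * d + t))"
  shows "contains_copy P (\<subseteq>) Or"
proof -
  define \<psi> where "\<psi> = (\<lambda>u. (u, c u))"
  have psiC: "\<psi> ` P \<subseteq> blowup_carrier P (\<subseteq>) x d" using c \<psi>_def by auto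
  have injpsi: "inj_on \<psi> P" unfolding \<psi>_def inj_on_def by auto
  have inj2: "inj_on (\<phi> \<circ> \<psi>) P"
    using comp_inj_on[OF injpsi inj_on_subset[OF inj psiC]] .
  have img: "(\<phi> \<circ> \<psi>) ` P \<subseteq> Or" using c \<psi>_def by auto
  have cdiv: "c u div d = c (par u)" if uP: "u \<in> P" and ux: "u \<noteq> x" for u
  proof -
    have "u \<noteq> x \<longrightarrow> (\<exists>t<d. c u = c (par u) * d + t)" using bspec[OF c uP] by (elim conjE)
    then obtain t where "t < d" "c u = c (par u) * d + t" using ux by blast
    then show ?thesis using div_aux by simp
  qed
  have edge: "blowup_edge P (\<subseteq>) x d (\<psi> s) (\<psi> t)" if st: "hasse_edge P (\<subseteq>) s t" for s t
  proof -
    have a: "adj s t" using st unfolding hasse_adj_def by simp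
    have sP: "s \<in> P" and tP: "t \<in> P" using adj_P[OF a] by auto
    have "(D s = Suc (D t) \<and> c s div d = c t) \<or> (D t = Suc (D s) \<and> c t div d = c s)"
    proof (cases "D s = Suc (D t)")
      case True
      then have "s \<noteq> x" using D_x by auto
      moreover have "par s = t" using par_unique[OF sP a] True by simp
      ultimately show ?thesis using cdiv[OF sP] True by simp
    next
      case False
      then have Dt: "D t = Suc (D s)" using edge_dist[OF a] by simp
      then have "t \<noteq> x" using D_x by auto
      moreover have "par t = s" using par_unique[OF tP adj_sym[OF a]] Dt by simp
      ultimately show ?thesis using cdiv[OF tP] Dt by simp
    qed
    then show ?thesis unfolding blowup_edge_def using psiC sP tP st \<psi>_def by auto
  qed
  have ord: "\<forall>a\<in>P. \<forall>b\<in>P. a \<subseteq> b \<longrightarrow> (\<phi> \<circ> \<psi>) a \<subseteq> (\<phi> \<circ> \<psi>) b"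
  proof (intro ballI impI)
    fix a b assume ab: "a \<in> P" "b \<in> P" "a \<subseteq> b"
    have "(hasse_edge P (\<subseteq>))\<^sup>*\<^sup>* a b" using le_rtranclp ab by blast
    then have "(blowup_edge P (\<subseteq>) x d)\<^sup>*\<^sup>* (\<psi> a) (\<psi> b)" using rtranclp_map edge by metis
    then have "blowup_le P (\<subseteq>) x d (\<psi> a) (\<psi> b)" unfolding blowup_le_def .
    moreover have "\<psi> a \<in> blowup_carrier P (\<subseteq>) x d" "\<psi> b \<in> blowup_carrier P (\<subseteq>) x d" using psiC ab by auto
    ultimately show "(\<phi> \<circ> \<psi>) a \<subseteq> (\<phi> \<circ> \<psi>) b" using mono by simp
  qed
  show ?thesis unfolding contains_copy_def using inj2 img ord by blast
qed

end

theorem lemma3p1: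
  fixes P :: "'a set set" and x :: "'a set" and \<epsilon> \<delta> :: real
  assumes finP: "finite P" and finElems: "\<forall>A\<in>P. finite A"
    and tree: "tree_poset P (\<subseteq>)"
    and xP: "x \<in> P"
    and eps: "\<epsilon> > 0" and delta: "\<delta> > 0"
    and hyp: "\<exists>N. \<forall>n\<ge>N. \<forall>F. F \<subseteq> Pow {1..n} \<and>
        real (card F) \<ge> (real (poset_height P (\<subseteq>)) - 1 + \<epsilon>) * real (n choose (n div 2))
        \<longrightarrow> contains_copy (blowup_carrier P (\<subseteq>) x (nat \<lfloor>\<delta> * real n\<rfloor>))
                          (blowup_le P (\<subseteq>) x (nat \<lfloor>\<delta> * real n\<rfloor>)) F"
  shows "\<exists>N. \<forall>n\<ge>N. \<exists>f :: nat set set \<Rightarrow> nat set set.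
     (\<forall>H. H \<subseteq> Pow {1..n} \<and> real (card H) \<le> real (card P) * 2 ^ n / (\<delta> * real n)
        \<longrightarrow> f H \<subseteq> Pow {1..n} \<and>
            real (card (f H)) \<le> (real (poset_height P (\<subseteq>)) - 1 + \<epsilon>) * real (n choose (n div 2))) \<and>
     (\<forall>F. F \<subseteq> Pow {1..n} \<and> \<not> contains_copy P (\<subseteq>) F \<longrightarrow>
        (\<exists>H. H \<subseteq> F \<and> real (card H) \<le> real (card P) * 2 ^ n / (\<delta> * real n) \<and>
             F \<subseteq> H \<union> f H))"
proof -
  interpret tp P x using tree xP by unfold_locales
  define h where "h = poset_height P (\<subseteq>)"
  obtain N0 where N0: "\<forall>n\<ge>N0. \<forall>F. F \<subseteq> Pow {1..n} \<and>
        real (card F) \<ge> (real h - 1 + \<epsilon>) * real (n choose (n div 2))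
        \<longrightarrow> contains_copy (blowup_carrier P (\<subseteq>) x (nat \<lfloor>\<delta> * real n\<rfloor>))
                          (blowup_le P (\<subseteq>) x (nat \<lfloor>\<delta> * real n\<rfloor>)) F"
    using hyp h_def by blast
  have h1: "1 \<le> h"
  proof -
    define CS where "CS = {card C | C. C \<subseteq> P \<and> (\<forall>a\<in>C. \<forall>b\<in>C. a \<subseteq> b \<or> b \<subseteq> a)}"
    have "CS \<subseteq> card ` Pow P" unfolding CS_def by blast
    then have fin: "finite CS" using finP finite_subset by blast
    have "card {x} \<in> CS" unfolding CS_def using xP by blast
    then have "1 \<in> CS" by simp
    then have "1 \<le> Max CS" using fin by simp
    then show ?thesis unfolding h_def poset_height_def CS_def by simp
  qed
  obtain xs where xs: "distinct xs" "set xs = P - {x}" using finite_distinct_list[of "P - {x}"] finP by blast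
  define rest where "rest = sort_key D xs"
  have rest: "distinct rest" "set rest = P - {x}" "sorted_wrt (\<lambda>a b. D a \<le> D b) rest"
  proof -
    show "distinct rest" unfolding rest_def using xs(1) by simp
    show "set rest = P - {x}" unfolding rest_def using xs(2) by simp
    have "sorted (map D rest)" unfolding rest_def by simp
    then show "sorted_wrt (\<lambda>a b. D a \<le> D b) rest" by (simp only: sorted_map)
  qed
  define us where "us = x # rest"
  have us_dist: "distinct us" using rest unfolding us_def by auto
  have us_set: "set us = P" using rest xP unfolding us_def by auto
  have len_us: "length us = card P" using distinct_card[OF us_dist] us_set by simp
  have parP: "\<forall>u\<in>set us. u \<in> P \<and> (u \<noteq> x \<longrightarrow> par u \<in> P \<and> Suc (D (par u)) = D u)"
  proof
    fix u assume u: "u \<in> set us"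
    then have uP: "u \<in> P" using us_set by simp
    show "u \<in> P \<and> (u \<noteq> x \<longrightarrow> par u \<in> P \<and> Suc (D (par u)) = D u)"
    proof (intro conjI impI)
      show "u \<in> P" by (rule uP)
      assume "u \<noteq> x"
      then have pu: "adj u (par u) \<and> Suc (D (par u)) = D u" using par_props uP by blast
      then show "par u \<in> P" using adj_P by blast
      show "Suc (D (par u)) = D u" using pu by blast
    qed
  qed
  have us_sorted: "sorted_wrt (\<lambda>a b. a \<noteq> x \<longrightarrow> par a \<noteq> b) us"
  proof -
    have "sorted_wrt (\<lambda>a b. a \<noteq> x \<longrightarrow> par a \<noteq> b) rest"
    proof (rule sorted_wrt_mono_rel[OF _ rest(3)])
      fix a b assume ab: "a \<in> set rest" "b \<in> set rest" "D a \<le> D b"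
      show "a \<noteq> x \<longrightarrow> par a \<noteq> b"
      proof
        assume "a \<noteq> x"
        moreover have "a \<in> set us" using ab(1) unfolding us_def by simp
        ultimately have sa: "Suc (D (par a)) = D a" using parP by blast
        show "par a \<noteq> b"
        proof
          assume "par a = b"
          then have "D a \<le> D (par a)" using ab(3) by simp
          then show False using sa by simp
        qed
      qed
    qed
    then show ?thesis unfolding us_def by simp
  qed
  have us_par: "\<forall>u\<in>set us. u \<noteq> x \<longrightarrow> par u \<noteq> u"
  proof (intro ballI impI)
    fix u assume "u \<in> set us" "u \<noteq> x"
    then have "Suc (D (par u)) = D u" using parP by auto
    then show "par u \<noteq> u" by (metis n_not_Suc_n)
  qed
  have xrest: "x \<notin> set rest" using rest by auto
  show ?thesis
  proof (intro exI[of _ "max N0 1"] allI impI)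
    fix n assume n: "max N0 1 \<le> n"
    define d where "d = nat \<lfloor>\<delta> * real n\<rfloor>"
    define U where "U = Pow {1..n::nat}"
    define B where "B = (real h - 1 + \<epsilon>) * real (n choose (n div 2))"
    define big where "big = (\<lambda>A::nat set set. B \<le> real (card A))"
    define carr where "carr = blowup_carrier P (\<subseteq>) x d"
    define ble where "ble = blowup_le P (\<subseteq>) x d"
    define iscopy where "iscopy = (\<lambda>A (\<phi>::'a set \<times> nat \<Rightarrow> nat set). inj_on \<phi> carr \<and> \<phi> ` carr \<subseteq> A \<and>
        (\<forall>a\<in>carr. \<forall>b\<in>carr. ble a b \<longrightarrow> \<phi> a \<subseteq> \<phi> b))"
    define cp where "cp = (\<lambda>A. SOME \<phi>. iscopy A \<phi>)"
    define run where "run = (\<lambda>A Or. dfs x d par (\<lambda>p. cp A p \<in> Or) us (\<lambda>_. 0))"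
    define st where "st = (\<lambda>A Or. cp A ` fst (snd (run A Or)))"
    define K where "K = Suc (card U)"
    define f where "f = (\<lambda>H. iter st big K U H)"
    have n1: "1 \<le> n" "N0 \<le> n" using n by auto
    have fU: "finite U" unfolding U_def by simp
    have cardU: "card U = 2 ^ n" unfolding U_def by (simp add: card_Pow)
    have Bpos: "0 < B"
    proof -
      have "0 < n choose (n div 2)" by (rule zero_less_binomial) simp
      moreover have "0 < real h - 1 + \<epsilon>" using h1 eps by simp
      ultimately show ?thesis unfolding B_def by simp
    qed
    have copy: "iscopy A (cp A)" if A: "A \<subseteq> U" "big A" for A
    proof -
      have "contains_copy carr ble A"
        using N0 n1 A unfolding U_def big_def B_def carr_def ble_def d_def by blast
      then have "\<exists>\<phi>. iscopy A \<phi>" unfolding contains_copy_def iscopy_def by blast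
      then show ?thesis unfolding cp_def by (rule someI_ex)
    qed
    have carr_eq: "carr = {p. fst p \<in> P \<and> snd p < d ^ D (fst p)}"
      unfolding carr_def blowup_carrier_def by auto
    have runQ: "\<forall>p\<in>fst (snd (run A Or)). p \<in> carr" for A Or
    proof -
      obtain c' Q ok where e: "run A Or = (c', Q, ok)" by (cases "run A Or") auto
      have "\<forall>p\<in>Q. fst p \<in> P \<and> snd p < d ^ D (fst p)"
        using dfs_carrier[of x d par _ us "\<lambda>_. 0" c' Q ok P D] e parP D_x unfolding run_def by auto
      then show ?thesis using e carr_eq by auto
    qed
    have root: "(x, 0) \<in> fst (snd (run A Or))" for A Or
    proof -
      obtain c' Q ok where e: "run A Or = (c', Q, ok)" by (cases "run A Or") auto
      then show ?thesis using dfs_root[of x d par _ rest "\<lambda>_. 0" c' Q ok] unfolding run_def us_def by auto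
    qed
    have st_sub: "st A Or \<noteq> {} \<and> st A Or \<subseteq> A" if A: "A \<subseteq> U" "big A" for A Or
    proof -
      have "cp A ` carr \<subseteq> A" using copy[OF A] unfolding iscopy_def by auto
      have r1: "fst (snd (run A Or)) \<subseteq> carr" using runQ[of A Or] by blast
      have r2: "cp A ` fst (snd (run A Or)) \<subseteq> A" using image_mono[OF r1] \<open>cp A ` carr \<subseteq> A\<close> by (rule subset_trans)
      have r3: "cp A (x, 0) \<in> st A Or" unfolding st_def using root[of A Or] by (rule imageI)
      have "st A Or \<noteq> {}" using r3 by blast
      moreover have "st A Or \<subseteq> A" unfolding st_def by (rule r2)
      ultimately show ?thesis by blast
    qed
    have st_loc: "st A Or' = st A Or" if A: "A \<subseteq> U" "big A" and ag: "\<forall>G\<in>st A Or. G \<in> Or \<longleftrightarrow> G \<in> Or'" for A Or Or'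
    proof -
      obtain c' Q ok where e: "run A Or = (c', Q, ok)" by (cases "run A Or") auto
      have stQ: "st A Or = cp A ` Q" using e unfolding st_def by simp
      have agr: "\<forall>p\<in>Q. (cp A p \<in> Or') = (cp A p \<in> Or)"
      proof
        fix p assume "p \<in> Q"
        then have "cp A p \<in> st A Or" unfolding stQ by (rule imageI)
        then show "(cp A p \<in> Or') = (cp A p \<in> Or)" using ag by blast
      qed
      have e0: "dfs x d par (\<lambda>p. cp A p \<in> Or) us (\<lambda>_. 0) = (c', Q, ok)" using e unfolding run_def .
      have "dfs x d par (\<lambda>p. cp A p \<in> Or') us (\<lambda>_. 0) = (c', Q, ok)" by (rule dfs_local[OF e0 agr])
      then have "run A Or' = (c', Q, ok)" unfolding run_def .
      then show ?thesis using e unfolding st_def by simp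
    qed
    have st_cost: "card (st A Or \<inter> Or) * (d + 1) \<le> card P * card (st A Or)"
      if A: "A \<subseteq> U" "big A" and free: "\<not> contains_copy P (\<subseteq>) Or" for A Or
    proof -
      obtain c' Q ok where e: "run A Or = (c', Q, ok)" by (cases "run A Or") auto
      define \<phi> where "\<phi> = cp A"
      have cpy: "iscopy A \<phi>" using copy[OF A] \<phi>_def by simp
      have Qc: "Q \<subseteq> carr" using runQ[of A Or] unfolding e by auto
      have injC: "inj_on \<phi> carr" using cpy unfolding iscopy_def by blast
      have injQ: "inj_on \<phi> Q" using inj_on_subset[OF injC Qc] .
      have stQ: "st A Or = \<phi> ` Q" using e unfolding st_def \<phi>_def by simp
      have e': "dfs x d par (\<lambda>p. \<phi> p \<in> Or) us (\<lambda>_. 0) = (c', Q, ok)" using e unfolding run_def \<phi>_def by simp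
      have finQ: "finite Q" using dfs_finite[OF e'] .
      have c1: "card (st A Or) = card Q" unfolding stQ by (rule card_image[OF injQ])
      have eqi: "st A Or \<inter> Or = \<phi> ` {p\<in>Q. \<phi> p \<in> Or}" unfolding stQ by blast
      have "finite {p\<in>Q. \<phi> p \<in> Or}" using finQ by simp
      then have "card (st A Or \<inter> Or) \<le> card {p\<in>Q. \<phi> p \<in> Or}" unfolding eqi by (rule card_image_le)
      also have "\<dots> \<le> length us" using dfs_cost[OF e'] .
      finally have c2: "card (st A Or \<inter> Or) \<le> card P" using len_us by simp
      show ?thesis
      proof (cases "\<exists>p\<in>Q. \<phi> p \<in> Or")
        case False
        then have "st A Or \<inter> Or = {}" using stQ by auto
        then show ?thesis by simp
      next
        case True
        have okF: "ok = False"
        proof (rule ccontr)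
          assume "ok \<noteq> False"
          then have e'': "dfs x d par (\<lambda>p. \<phi> p \<in> Or) us (\<lambda>_. 0) = (c', Q, True)" using e' by simp
          have props: "\<forall>u\<in>set us. (u, c' u) \<in> Q \<and> \<phi> (u, c' u) \<in> Or \<and> (u \<noteq> x \<longrightarrow> (\<exists>t<d. c' u = c' (par u) * d + t))"
            using dfs_ok[OF e'' us_dist us_sorted us_par] by simp
          have cP: "\<forall>u\<in>P. (u, c' u) \<in> blowup_carrier P (\<subseteq>) x d \<and> \<phi> (u, c' u) \<in> Or \<and>
               (u \<noteq> x \<longrightarrow> (\<exists>t<d. c' u = c' (par u) * d + t))"
          proof
            fix u assume "u \<in> P"
            then have uu: "u \<in> set us" using us_set by simp
            have "(u, c' u) \<in> Q" using props uu by blast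
            then have "(u, c' u) \<in> blowup_carrier P (\<subseteq>) x d" using Qc unfolding carr_def by blast
            then show "(u, c' u) \<in> blowup_carrier P (\<subseteq>) x d \<and> \<phi> (u, c' u) \<in> Or \<and>
               (u \<noteq> x \<longrightarrow> (\<exists>t<d. c' u = c' (par u) * d + t))" using props uu by blast
          qed
          have injf: "inj_on \<phi> (blowup_carrier P (\<subseteq>) x d)" using cpy unfolding iscopy_def carr_def by simp
          have monof: "\<forall>a\<in>blowup_carrier P (\<subseteq>) x d. \<forall>b\<in>blowup_carrier P (\<subseteq>) x d.
                 blowup_le P (\<subseteq>) x d a b \<longrightarrow> \<phi> a \<subseteq> \<phi> b" using cpy unfolding iscopy_def carr_def ble_def by simp
          have "contains_copy P (\<subseteq>) Or" by (rule embed[OF injf monof cP])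
          then show False using free by simp
        qed
        have eF: "dfs x d par (\<lambda>p. \<phi> p \<in> Or) (x # rest) (\<lambda>_. 0) = (c', Q, False)" using e' okF us_def by simp
        obtain u b where ub: "u \<noteq> x" "insert (x, 0) ((\<lambda>t. (u, b * d + t)) ` {..<d}) \<subseteq> Q"
          using dfs_root_fail[OF eF xrest] True by blast
        have "inj_on (\<lambda>t. (u, b * d + t)) {..<d}" unfolding inj_on_def by auto
        then have "card ((\<lambda>t. (u, b * d + t)) ` {..<d}) = d" by (simp add: card_image)
        moreover have "(x, 0) \<notin> (\<lambda>t. (u, b * d + t)) ` {..<d}" using ub by auto
        ultimately have "card (insert (x, 0) ((\<lambda>t. (u, b * d + t)) ` {..<d})) = Suc d" by simp
        then have "Suc d \<le> card Q" using card_mono[OF finQ ub(2)] by simp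
        have "card (st A Or \<inter> Or) * (d + 1) \<le> card P * (d + 1)" using c2 by (rule mult_le_mono1)
        also have "\<dots> \<le> card P * card Q" using \<open>Suc d \<le> card Q\<close> by (intro mult_le_mono2) simp
        finally have "card (st A Or \<inter> Or) * (d + 1) \<le> card P * card Q" .
        then show ?thesis using c1 by simp
      qed
    qed
    have partA: "\<forall>H. H \<subseteq> Pow {1..n} \<and> real (card H) \<le> real (card P) * 2 ^ n / (\<delta> * real n)
        \<longrightarrow> f H \<subseteq> Pow {1..n} \<and>
            real (card (f H)) \<le> (real (poset_height P (\<subseteq>)) - 1 + \<epsilon>) * real (n choose (n div 2))"
    proof (intro allI impI)
      fix H :: "nat set set"
      have "f H \<subseteq> U" unfolding f_def by (rule iter_sub)
      moreover have "\<not> big (iter st big (Suc (card U)) U H)"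
        using iter_small[of U big st, OF st_sub fU, of U "Suc (card U)" H] by simp
      then have "\<not> big (f H)" unfolding f_def K_def .
      ultimately show "f H \<subseteq> Pow {1..n} \<and>
            real (card (f H)) \<le> (real (poset_height P (\<subseteq>)) - 1 + \<epsilon>) * real (n choose (n div 2))"
        unfolding U_def big_def B_def h_def by auto
    qed
    have partB: "\<forall>F. F \<subseteq> Pow {1..n} \<and> \<not> contains_copy P (\<subseteq>) F \<longrightarrow>
        (\<exists>H. H \<subseteq> F \<and> real (card H) \<le> real (card P) * 2 ^ n / (\<delta> * real n) \<and>
             F \<subseteq> H \<union> f H)"
    proof (intro allI impI)
      fix F :: "nat set set" assume F: "F \<subseteq> Pow {1..n} \<and> \<not> contains_copy P (\<subseteq>) F"
      define R where "R = iter st big K U F"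
      define H where "H = F - R"
      have RU: "R \<subseteq> U" unfolding R_def by (rule iter_sub)
      have agr: "\<forall>G\<in>U - iter st big K U F. G \<in> F \<longleftrightarrow> G \<in> H" unfolding H_def R_def by blast
      have st_sub2: "st A Or \<subseteq> A" if "A \<subseteq> U" "big A" for A Or using st_sub[OF that] by blast
      have UU: "U \<subseteq> U" by simp
      have "iter st big K U H = iter st big K U F"
        by (rule iter_local[of U big st, OF st_sub2 st_loc UU agr])
      then have fH: "f H = R" unfolding f_def R_def .
      have Ffree: "\<not> contains_copy P (\<subseteq>) F" using F by blast
      have stc: "st A F \<subseteq> A \<and> card (st A F \<inter> F) * (d + 1) \<le> card P * card (st A F)"
        if "A \<subseteq> U" "big A" for A
        using st_sub2[OF that] st_cost[OF that Ffree] by blast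
      have cost: "card (F \<inter> (U - R)) * (d + 1) \<le> card P * card (U - R)"
        unfolding R_def by (rule iter_cost[of U big st F "d + 1" "card P", OF stc fU UU])
      have HFR: "H = F \<inter> (U - R)" using F unfolding H_def U_def by blast
      have "card (U - R) \<le> card U" by (rule card_mono[OF fU]) blast
      then have cUR: "card (U - R) \<le> 2 ^ n" using cardU by simp
      have "card H * (d + 1) = card (F \<inter> (U - R)) * (d + 1)" using HFR by simp
      also have "\<dots> \<le> card P * card (U - R)" by (rule cost)
      also have "\<dots> \<le> card P * 2 ^ n" using cUR by (rule mult_le_mono2)
      finally have hN: "card H * (d + 1) \<le> card P * 2 ^ n" .
      have "real (card H * (d + 1)) \<le> real (card P * 2 ^ n)" using hN by (simp only: of_nat_le_iff)
      then have rH: "real (card H) * (real d + 1) \<le> real (card P) * 2 ^ n" by (simp add: algebra_simps)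
      have fl0: "0 \<le> \<lfloor>\<delta> * real n\<rfloor>" using delta by simp
      have rd: "real d = real_of_int \<lfloor>\<delta> * real n\<rfloor>" unfolding d_def using fl0 by simp
      have "\<delta> * real n < real_of_int (\<lfloor>\<delta> * real n\<rfloor> + 1)" using floor_correct[of "\<delta> * real n"] by blast
      then have dn: "\<delta> * real n < real d + 1" using rd by simp
      have dnpos: "0 < \<delta> * real n" using delta n1 by simp
      have "real (card H) * (\<delta> * real n) \<le> real (card H) * (real d + 1)"
        using dn by (intro mult_left_mono) auto
      then have "real (card H) * (\<delta> * real n) \<le> real (card P) * 2 ^ n" using rH by linarith
      then have "real (card H) \<le> real (card P) * 2 ^ n / (\<delta> * real n)"
        using dnpos by (simp add: pos_le_divide_eq)
      moreover have "H \<subseteq> F" unfolding H_def by blast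
      moreover have "F \<subseteq> H \<union> f H"
      proof -
        have "F \<subseteq> H \<union> R" unfolding H_def by blast
        then show ?thesis unfolding fH .
      qed
      ultimately show "\<exists>H. H \<subseteq> F \<and> real (card H) \<le> real (card P) * 2 ^ n / (\<delta> * real n) \<and> F \<subseteq> H \<union> f H"
        by blast
    qed
    show "\<exists>f :: nat set set \<Rightarrow> nat set set.
     (\<forall>H. H \<subseteq> Pow {1..n} \<and> real (card H) \<le> real (card P) * 2 ^ n / (\<delta> * real n)
        \<longrightarrow> f H \<subseteq> Pow {1..n} \<and>
            real (card (f H)) \<le> (real (poset_height P (\<subseteq>)) - 1 + \<epsilon>) * real (n choose (n div 2))) \<and>
     (\<forall>F. F \<subseteq> Pow {1..n} \<and> \<not> contains_copy P (\<subseteq>) F \<longrightarrow>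
        (\<exists>H. H \<subseteq> F \<and> real (card H) \<le> real (card P) * 2 ^ n / (\<delta> * real n) \<and>
             F \<subseteq> H \<union> f H))"
      by (rule exI[of _ f]) (rule conjI[OF partA partB])
  qed
qed

end
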